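(* Let $A,B$ be nonempty persistence diagrams, $\Theta(c)=d_\infty(cA,B)$, and let $a^{(m)}=(a^{(m)}_x,a^{(m)}_y)$ be a point of $\chi(A)$ with the largest $y$-coordinate among points of $\chi(A)$. If $$c\ge \max\Big\{\frac{2\,\mathrm{bd}(B)}{a^{(m)}_x+a^{(m)}_y},\ \frac{\mathrm{pers}(B)}{\mathrm{pers}(A)}\Big\},$$ then $\Theta(c)=c\cdot\mathrm{pers}(A)$.
   Context: A persistence diagram is a finite multiset of points $a=(a_x,a_y)$ with $0\le a_x<a_y<\infty$ together with the diagonal $\Delta$ of infinite multiplicity; nonempty means it has at least one such point. $d_\infty$ is the bottleneck distance (infimum over multi-bijections between $A\cup\Delta$ and $B\cup\Delta$ of the maximal $\ell^\infty$ distance; matching $a$ to $\Delta$ costs $\mathrm{pers}(a)$). $cA=\{(ca_x,ca_y)\}$ for $c>0$. $\mathrm{pers}(a)=(a_y-a_x)/2$; $\mathrm{pers}(A)=\max_{a\in A}\mathrm{pers}(a)$; $\chi(A)$ is the multiset of points of $A$ with persistence equal to $\mathrm{pers}(A)$; $\mathrm{bd}(A)=\max_{a\in A}a_y$. *)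

theory Defs
  imports "HOL-Analysis.Analysis" "HOL-Library.Multiset"
begin

type_synonym pt = "real \<times> real"

text \<open>A persistence diagram: finite multiset of off-diagonal points (x,y) with 0 <= x < y
  (the diagonal, of infinite multiplicity, is implicit).\<close>
definition is_diagram :: "pt multiset \<Rightarrow> bool" where
  "is_diagram A \<longleftrightarrow> (\<forall>a\<in>#A. 0 \<le> fst a \<and> fst a < snd a)"

definition linf :: "pt \<Rightarrow> pt \<Rightarrow> real" where
  "linf p q = max \<bar>fst p - fst q\<bar> \<bar>snd p - snd q\<bar>"

definition pers :: "pt \<Rightarrow> real" where
  "pers a = (snd a - fst a) / 2"

definition persD :: "pt multiset \<Rightarrow> real" where
  "persD A = Max (pers ` set_mset A)"

definition chi :: "pt multiset \<Rightarrow> pt multiset" where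
  "chi A = filter_mset (\<lambda>a. pers a = persD A) A"

definition bd :: "pt multiset \<Rightarrow> real" where
  "bd A = Max (snd ` set_mset A)"

definition scaleD :: "real \<Rightarrow> pt multiset \<Rightarrow> pt multiset" where
  "scaleD c A = image_mset (\<lambda>a. (c * fst a, c * snd a)) A"

text \<open>A multi-bijection between A \<union> \<Delta> and B \<union> \<Delta> is determined by the multiset M of
  pairs of off-diagonal points matched to each other; all remaining points of A and B
  are matched to the diagonal (cost pers), and diagonal-to-diagonal pairs cost 0.\<close>
definition is_matching :: "pt multiset \<Rightarrow> pt multiset \<Rightarrow> (pt \<times> pt) multiset \<Rightarrow> bool" where
  "is_matching A B M \<longleftrightarrow> image_mset fst M \<subseteq># A \<and> image_mset snd M \<subseteq># B"

definition match_cost :: "pt multiset \<Rightarrow> pt multiset \<Rightarrow> (pt \<times> pt) multiset \<Rightarrow> real" where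
  "match_cost A B M = Max (insert 0
      ((\<lambda>p. linf (fst p) (snd p)) ` set_mset M
       \<union> pers ` set_mset (A - image_mset fst M)
       \<union> pers ` set_mset (B - image_mset snd M)))"

definition bottleneck :: "pt multiset \<Rightarrow> pt multiset \<Rightarrow> real" where
  "bottleneck A B = Inf {match_cost A B M | M. is_matching A B M}"

end

theory Submission
  imports Defs
begin

theorem mainTheorem7:
  fixes A B :: "pt multiset" and am :: pt and c :: real
  assumes "is_diagram A" and "is_diagram B"
    and "A \<noteq> {#}" and "B \<noteq> {#}"
    and "am \<in># chi A"
    and "\<forall>a\<in>#chi A. snd a \<le> snd am"
    and "c > 0"
    and "c \<ge> max (2 * bd B / (fst am + snd am)) (persD B / persD A)"
  shows "bottleneck (scaleD c A) B = c * persD A"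
proof -
  define P where "P = persD A"
  have amA: "am \<in># A" and pam: "pers am = P" using assms(5) by (auto simp: chi_def P_def)
  have amx: "0 \<le> fst am" "fst am < snd am" using assms(1) amA by (auto simp: is_diagram_def)
  have Ppos: "P > 0" using pam amx by (simp add: pers_def)
  have PA: "\<And>a. a \<in># A \<Longrightarrow> pers a \<le> P"
    unfolding P_def persD_def by (rule Max_ge) auto
  have PB: "\<And>b. b \<in># B \<Longrightarrow> pers b \<le> persD B"
    unfolding persD_def by (rule Max_ge) auto
  have BD: "\<And>b. b \<in># B \<Longrightarrow> snd b \<le> bd B"
    unfolding bd_def by (rule Max_ge) auto
  have c1: "persD B / P \<le> c" using assms(8) P_def by simp
  hence cB: "persD B \<le> c * P" using Ppos by (simp add: divide_le_eq mult.commute)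
  have s: "fst am + snd am > 0" using amx by simp
  have c2: "2 * bd B / (fst am + snd am) \<le> c" using assms(8) by simp
  hence cbd: "2 * bd B \<le> c * (fst am + snd am)" using s by (simp add: divide_le_eq mult.commute)
  define f where "f = (\<lambda>a::pt. (c * fst a, c * snd a))"
  have persf: "pers (f a) = c * pers a" for a by (simp add: f_def pers_def algebra_simps)
  have cA: "scaleD c A = image_mset f A" by (simp add: scaleD_def f_def)
  define cam where "cam = f am"
  have cam_in: "cam \<in># scaleD c A" using amA cA cam_def by simp
  have pcam: "pers cam = c * P" using persf pam cam_def by simp
  have lower: "c * P \<le> match_cost (scaleD c A) B M" if "is_matching (scaleD c A) B M" for M
  proof -
    let ?S = "insert 0 ((\<lambda>p. linf (fst p) (snd p)) ` set_mset M
       \<union> pers ` set_mset (scaleD c A - image_mset fst M)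
       \<union> pers ` set_mset (B - image_mset snd M))"
    have fin: "finite ?S" by simp
    have "\<exists>x\<in>?S. c * P \<le> x"
    proof (cases "cam \<in># image_mset fst M")
      case True
      then obtain p where p: "p \<in># M" "fst p = cam" by auto
      have "snd p \<in># image_mset snd M" using p by auto
      hence "snd p \<in># B" using that unfolding is_matching_def by (meson mset_subset_eqD)
      hence "snd (snd p) \<le> bd B" by (rule BD)
      hence "c * snd am - snd (snd p) \<ge> c * P"
        using cbd pam by (simp add: pers_def algebra_simps)
      hence "linf (fst p) (snd p) \<ge> c * P"
        using p(2) by (simp add: linf_def cam_def f_def)
      thus ?thesis using p(1) by blast
    next
      case False
      have "count (image_mset fst M) cam = 0" using False by (metis count_eq_zero_iff)
      hence "cam \<in># scaleD c A - image_mset fst M" using cam_in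
        by (simp add: in_diff_count)
      hence "pers cam \<in> ?S" by blast
      moreover have "c * P \<le> pers cam" using pcam by simp
      ultimately show ?thesis by (rule bexI[rotated])
    qed
    then obtain x where "x \<in> ?S" "c * P \<le> x" by blast
    moreover have "x \<le> Max ?S" using fin \<open>x \<in> ?S\<close> by (rule Max_ge)
    ultimately show ?thesis unfolding match_cost_def by linarith
  qed
  have empty: "match_cost (scaleD c A) B {#} = c * P"
  proof -
    let ?S = "insert 0 ((\<lambda>p. linf (fst p) (snd p)) ` set_mset ({#}::(pt\<times>pt) multiset)
       \<union> pers ` set_mset (scaleD c A - image_mset fst ({#}::(pt\<times>pt) multiset))
       \<union> pers ` set_mset (B - image_mset snd ({#}::(pt\<times>pt) multiset)))"
    have "Max ?S \<le> c * P"
    proof (subst Max_le_iff)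
      show "finite ?S" by simp
      show "?S \<noteq> {}" by simp
      show "\<forall>a\<in>?S. a \<le> c * P"
      proof
        fix x assume "x \<in> ?S"
        then consider "x = 0" | a where "a \<in># A" "x = pers (f a)" | b where "b \<in># B" "x = pers b"
          using cA by auto
        thus "x \<le> c * P"
        proof cases
          case 1 thus ?thesis using Ppos assms(7) by simp
        next
          case 2 thus ?thesis using PA[OF 2(1)] persf assms(7) by simp
        next
          case 3 thus ?thesis using PB[OF 3(1)] cB by simp
        qed
      qed
    qed
    moreover have "c * P \<le> Max ?S"
      using lower[of "{#}"] unfolding match_cost_def is_matching_def by simp
    ultimately have "Max ?S = c * P" by (rule antisym)
    thus ?thesis unfolding match_cost_def .
  qed
  have "bottleneck (scaleD c A) B = c * P"
    unfolding bottleneck_def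
  proof (rule cInf_eq_minimum)
    show "c * P \<in> {match_cost (scaleD c A) B M |M. is_matching (scaleD c A) B M}"
    proof -
      have m: "is_matching (scaleD c A) B {#}" by (simp add: is_matching_def)
      show ?thesis by (rule CollectI, rule exI[of _ "{#}"], rule conjI, rule empty[symmetric], rule m)
    qed
    fix x assume "x \<in> {match_cost (scaleD c A) B M |M. is_matching (scaleD c A) B M}"
    then obtain M where "x = match_cost (scaleD c A) B M" "is_matching (scaleD c A) B M" by auto
    thus "c * P \<le> x" using lower by simp
  qed
  thus ?thesis using P_def by simp
qed

end
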